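(* Let $G=(V,\mathcal E)$ be an undirected connected graph on $n$ nodes, all of whose links carry the same weight $\bar w>0$. Let $\tau\ge0$ with $\tau\lambda_n<\pi/2$. (a) Suppose $G$ is vertex-transitive and the noise is one of the agent-associated structures (dynamics, sensor, receiver or emitter noise; see context). Then every agent centrality index satisfies $\eta_i=\bar\rho/n$, where $\bar\rho$ is the performance of the network with $\sigma_1=\dots=\sigma_n=1$. (b) Suppose $G$ is edge-transitive and the noise is one of the link-associated structures (communication or measurement noise). Then every link centrality index satisfies $\nu_e=\bar{\bar\rho}/|\mathcal E|$, where $\bar{\bar\rho}$ is the performance of the network with $\sigma_e=1$ for all links $e$.
   Context: Graph matrices: - $E$ is the signed incidence matrix (arbitrary orientation) and $W=\bar wI$. - $L=EWE^T$ is the Laplacian with largest eigenvalue $\lambda_n$; $\Delta$ is the weighted-degree matrix and $A=\Delta-L$. - $M_n=I_n-\frac1n\mathbf1\mathbf1^T$. The network is $$\dot x(t)=-L\,x(t-\tau)+B\,\xi(t),\qquad y=M_nx,$$ with $\xi$ a vector of mutually independent zero-mean Gaussian white noises with intensities $\sigma_k^2$. The uncertainty structures are: - agent-associated: dynamics $B=I_n$; sensor $B=L$; receiver $B=\Delta$; emitter $B=A$; - link-associated: communication $B=EW$; measurement $B=-E$. The performance is $$\rho_{ss}=\lim_{t\to\infty}\mathbb E[y^Ty]=\frac1{2\pi}\int\mathrm{Tr}[G^HG]d\omega,\qquad G(s)=M_n(sI+e^{-\tau s}L)^{-1}B\,\mathrm{diag}(\sigma_k).$$ Agent centrality is $\eta_i=\partial\rho_{ss}/\partial\sigma_i^2$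 and link centrality is $\nu_e=\partial\rho_{ss}/\partial\sigma_e^2$. A graph is vertex-transitive (resp. edge-transitive) if its automorphism group acts transitively on its vertices (resp. edges). *)

theory Defs
  imports "HOL-Analysis.Analysis"
begin

text \<open>Graph: finite vertex type 'n, finite edge type 'e; edge e joins
  src e and tgt e (this fixes the arbitrary orientation of the incidence matrix).\<close>

definition simple_graph :: "('e::finite \<Rightarrow> 'n::finite) \<Rightarrow> ('e \<Rightarrow> 'n) \<Rightarrow> bool" where
  "simple_graph src tgt \<longleftrightarrow> (\<forall>e. src e \<noteq> tgt e) \<and>
     (\<forall>e f. {src e, tgt e} = {src f, tgt f} \<longrightarrow> e = f)"

definition adj :: "('e::finite \<Rightarrow> 'n::finite) \<Rightarrow> ('e \<Rightarrow> 'n) \<Rightarrow> 'n \<Rightarrow> 'n \<Rightarrow> bool" where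
  "adj src tgt u v \<longleftrightarrow> (\<exists>e. {src e, tgt e} = {u, v})"

definition connected_graph :: "('e::finite \<Rightarrow> 'n::finite) \<Rightarrow> ('e \<Rightarrow> 'n) \<Rightarrow> bool" where
  "connected_graph src tgt \<longleftrightarrow> (\<forall>u v. (u, v) \<in> {(a, b). adj src tgt a b}\<^sup>*)"

definition graph_automorphism :: "('e::finite \<Rightarrow> 'n::finite) \<Rightarrow> ('e \<Rightarrow> 'n) \<Rightarrow> ('n \<Rightarrow> 'n) \<Rightarrow> bool" where
  "graph_automorphism src tgt p \<longleftrightarrow> bij p \<and> (\<forall>u v. adj src tgt u v \<longleftrightarrow> adj src tgt (p u) (p v))"

definition vertex_transitive :: "('e::finite \<Rightarrow> 'n::finite) \<Rightarrow> ('e \<Rightarrow> 'n) \<Rightarrow> bool" where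
  "vertex_transitive src tgt \<longleftrightarrow> (\<forall>u v. \<exists>p. graph_automorphism src tgt p \<and> p u = v)"

definition edge_transitive :: "('e::finite \<Rightarrow> 'n::finite) \<Rightarrow> ('e \<Rightarrow> 'n) \<Rightarrow> bool" where
  "edge_transitive src tgt \<longleftrightarrow> (\<forall>e f. \<exists>p. graph_automorphism src tgt p \<and>
       p ` {src e, tgt e} = {src f, tgt f})"

definition incidence :: "('e::finite \<Rightarrow> 'n::finite) \<Rightarrow> ('e \<Rightarrow> 'n) \<Rightarrow> real^'e^'n" where
  "incidence src tgt = (\<chi> v e. if v = src e then 1 else if v = tgt e then -1 else 0)"

definition Wmat :: "real \<Rightarrow> real^'e::finite^'e" where
  "Wmat w = w *\<^sub>R mat 1"

definition laplacian :: "('e::finite \<Rightarrow> 'n::finite) \<Rightarrow> ('e \<Rightarrow> 'n) \<Rightarrow> real \<Rightarrow> real^'n^'n" where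
  "laplacian src tgt w = incidence src tgt ** Wmat w ** transpose (incidence src tgt)"

definition degree_mat :: "('e::finite \<Rightarrow> 'n::finite) \<Rightarrow> ('e \<Rightarrow> 'n) \<Rightarrow> real \<Rightarrow> real^'n^'n" where
  "degree_mat src tgt w = (\<chi> i j. if i = j then laplacian src tgt w $ i $ i else 0)"

definition adjacency_mat :: "('e::finite \<Rightarrow> 'n::finite) \<Rightarrow> ('e \<Rightarrow> 'n) \<Rightarrow> real \<Rightarrow> real^'n^'n" where
  "adjacency_mat src tgt w = degree_mat src tgt w - laplacian src tgt w"

definition centering :: "real^'n::finite^'n" where
  "centering = mat 1 - (\<chi> i j. 1 / real CARD('n))"

definition largest_eigenvalue :: "real^'n::finite^'n \<Rightarrow> real" where
  "largest_eigenvalue A = Max {\<mu>. \<exists>x. x \<noteq> 0 \<and> A *v x = \<mu> *\<^sub>R x}"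

datatype agent_noise = Dynamics | Sensor | Receiver | Emitter
datatype link_noise = Communication | Measurement

definition B_agent :: "('e::finite \<Rightarrow> 'n::finite) \<Rightarrow> ('e \<Rightarrow> 'n) \<Rightarrow> real \<Rightarrow> agent_noise \<Rightarrow> real^'n^'n" where
  "B_agent src tgt w s = (case s of
      Dynamics \<Rightarrow> mat 1
    | Sensor \<Rightarrow> laplacian src tgt w
    | Receiver \<Rightarrow> degree_mat src tgt w
    | Emitter \<Rightarrow> adjacency_mat src tgt w)"

definition B_link :: "('e::finite \<Rightarrow> 'n::finite) \<Rightarrow> ('e \<Rightarrow> 'n) \<Rightarrow> real \<Rightarrow> link_noise \<Rightarrow> real^'e^'n" where
  "B_link src tgt w s = (case s of
      Communication \<Rightarrow> incidence src tgt ** Wmat w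
    | Measurement \<Rightarrow> - incidence src tgt)"

definition cmat :: "real^'m::finite^'n::finite \<Rightarrow> complex^'m^'n" where
  "cmat A = (\<chi> i j. complex_of_real (A $ i $ j))"

definition conj_transpose :: "complex^'m::finite^'n::finite \<Rightarrow> complex^'n^'m" where
  "conj_transpose A = (\<chi> i j. cnj (A $ j $ i))"

text \<open>G(j\<omega>) = M_n (j\<omega> I + e^{-\<tau> j\<omega>} L)^{-1} B diag(sqrt(s_k)), where s_k = \<sigma>_k^2.\<close>
definition transfer :: "real^'n::finite^'n \<Rightarrow> real^'k::finite^'n \<Rightarrow> real \<Rightarrow> ('k \<Rightarrow> real) \<Rightarrow> real \<Rightarrow> complex^'k^'n" where
  "transfer L B tau s \<omega> =
     cmat centering **
     matrix_inv (\<chi> i j. (if i = j then \<i> * complex_of_real \<omega> else 0)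
                          + exp (- \<i> * complex_of_real (\<omega> * tau)) * complex_of_real (L $ i $ j)) **
     cmat B ** cmat (\<chi> i j. if i = j then sqrt (s i) else 0)"

definition performance :: "real^'n::finite^'n \<Rightarrow> real^'k::finite^'n \<Rightarrow> real \<Rightarrow> ('k \<Rightarrow> real) \<Rightarrow> real" where
  "performance L B tau s =
     1 / (2 * pi) * integral UNIV (\<lambda>\<omega>. Re (trace (conj_transpose (transfer L B tau s \<omega>) ** transfer L B tau s \<omega>)))"

end

theory Submission
  imports Defs
begin


definition Kmat :: "real^'n::finite^'n \<Rightarrow> real \<Rightarrow> real \<Rightarrow> complex^'n^'n" where
  "Kmat L tau \<omega> = (\<chi> i j. (if i = j then \<i> * complex_of_real \<omega> else 0)
                          + exp (- \<i> * complex_of_real (\<omega> * tau)) * complex_of_real (L $ i $ j))"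

definition Xmat :: "real^'n::finite^'n \<Rightarrow> real^'k::finite^'n \<Rightarrow> real \<Rightarrow> real \<Rightarrow> complex^'k^'n" where
  "Xmat L B tau \<omega> = cmat centering ** matrix_inv (Kmat L tau \<omega>) ** cmat B"

definition cn :: "real^'n::finite^'n \<Rightarrow> real^'k::finite^'n \<Rightarrow> real \<Rightarrow> real \<Rightarrow> 'k \<Rightarrow> real" where
  "cn L B tau \<omega> k = (\<Sum>a\<in>UNIV. (cmod (Xmat L B tau \<omega> $ a $ k))^2)"

lemma transfer_eq: "transfer L B tau s \<omega> = Xmat L B tau \<omega> ** cmat (\<chi> i j. if i = j then sqrt (s i) else 0)"
  unfolding transfer_def Xmat_def Kmat_def by simp

lemma mul_diag: "(X ** cmat (\<chi> i j. if i = j then sqrt (s i) else 0)) $ a $ k = X $ a $ k * complex_of_real (sqrt (s k))"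
proof -
  have "\<And>x y::complex. \<And>P. x * (if P then y else 0) = (if P then x * y else 0)" by simp
  then show ?thesis unfolding matrix_matrix_mult_def cmat_def by (simp add: if_distrib[of complex_of_real] cong: if_cong)
qed

lemma trace_eq:
  "Re (trace (conj_transpose (transfer L B tau s \<omega>) ** transfer L B tau s \<omega>)) = (\<Sum>k\<in>UNIV. \<bar>s k\<bar> * cn L B tau \<omega> k)"
proof -
  let ?G = "transfer L B tau s \<omega>"
  have "Re (trace (conj_transpose ?G ** ?G)) = (\<Sum>k\<in>UNIV. \<Sum>a\<in>UNIV. Re (cnj (?G $ a $ k) * ?G $ a $ k))"
    unfolding trace_def matrix_matrix_mult_def conj_transpose_def by (simp add: Re_sum)
  also have "\<dots> = (\<Sum>k\<in>UNIV. \<Sum>a\<in>UNIV. (cmod (?G $ a $ k))^2)"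
    by (intro sum.cong refl) (metis Re_complex_of_real complex_norm_square mult.commute)
  also have "\<dots> = (\<Sum>k\<in>UNIV. \<Sum>a\<in>UNIV. \<bar>s k\<bar> * (cmod (Xmat L B tau \<omega> $ a $ k))^2)"
    unfolding transfer_eq mul_diag
    by (intro sum.cong refl) (simp add: norm_mult power_mult_distrib power2_eq_square)
  finally show ?thesis unfolding cn_def by (simp add: sum_distrib_left)
qed

lemma perf_sym:
  assumes "negligible S" and "\<And>\<omega> k. \<omega> \<notin> S \<Longrightarrow> cn L B tau \<omega> k = cn L B tau \<omega> kk"
  shows "performance L B tau s = (\<Sum>k\<in>UNIV. \<bar>s k\<bar>) * (1 / (2 * pi) * integral UNIV (\<lambda>\<omega>. cn L B tau \<omega> kk))"
proof -
  have "integral UNIV (\<lambda>\<omega>. \<Sum>k\<in>UNIV. \<bar>s k\<bar> * cn L B tau \<omega> k)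
      = integral UNIV (\<lambda>\<omega>. (\<Sum>k\<in>UNIV. \<bar>s k\<bar>) *\<^sub>R cn L B tau \<omega> kk)"
  proof (rule integral_spike[OF assms(1)])
    fix \<omega> assume "\<omega> \<in> UNIV - S"
    then have h: "\<And>k. cn L B tau \<omega> k = cn L B tau \<omega> kk" using assms(2) by blast
    have "(\<Sum>k\<in>UNIV. \<bar>s k\<bar> * cn L B tau \<omega> k) = (\<Sum>k\<in>UNIV. \<bar>s k\<bar> * cn L B tau \<omega> kk)"
      by (rule sum.cong[OF refl]) (subst h, rule refl)
    then show "(\<Sum>k\<in>UNIV. \<bar>s k\<bar>) *\<^sub>R cn L B tau \<omega> kk = (\<Sum>k\<in>UNIV. \<bar>s k\<bar> * cn L B tau \<omega> k)"
      by (simp add: sum_distrib_right del: cn_def)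
  qed
  then show ?thesis unfolding performance_def trace_eq by simp
qed

lemma deriv_from_sym:
  fixes L :: "real^'n::finite^'n" and B :: "real^'k::finite^'n"
  assumes "negligible S" "\<And>\<omega> k. \<omega> \<notin> S \<Longrightarrow> cn L B tau \<omega> k = cn L B tau \<omega> kk" "s i > 0"
  shows "((\<lambda>t. performance L B tau (s(i:=t))) has_real_derivative
           performance L B tau (\<lambda>_. 1) / real CARD('k)) (at (s i))"
proof -
  define C where "C = 1 / (2 * pi) * integral UNIV (\<lambda>\<omega>. cn L B tau \<omega> kk)"
  define A where "A = (\<Sum>k\<in>UNIV-{i}. \<bar>s k\<bar>)"
  have P1: "performance L B tau (\<lambda>_. 1) = real CARD('k) * C"
    using perf_sym[OF assms(1,2), of "\<lambda>_. 1"] unfolding C_def by simp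
  have eq: "performance L B tau (s(i:=t)) = (A + t) * C" if "t \<in> {0<..}" for t
  proof -
    have "(\<Sum>k\<in>UNIV. \<bar>(s(i:=t)) k\<bar>) = \<bar>(s(i:=t)) i\<bar> + (\<Sum>k\<in>UNIV-{i}. \<bar>(s(i:=t)) k\<bar>)"
      by (rule sum.remove) auto
    also have "\<dots> = t + A" using that unfolding A_def by (intro arg_cong2[where f="(+)"]) (auto intro: sum.cong)
    finally show ?thesis using perf_sym[OF assms(1,2), of "s(i:=t)"] unfolding C_def by simp
  qed
  have "((\<lambda>t. (A + t) * C) has_real_derivative C) (at (s i))"
    by (auto intro!: derivative_eq_intros)
  then have "((\<lambda>t. performance L B tau (s(i:=t))) has_real_derivative C) (at (s i))"
    by (rule has_field_derivative_transform_within_open[where S="{0<..}"]) (use assms(3) eq in auto)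
  moreover have "C = performance L B tau (\<lambda>_. 1) / real CARD('k)" using P1 by simp
  ultimately show ?thesis by simp
qed

lemma cmod_sq_c: "(complex_of_real (cmod z))^2 = z * cnj z"
  by (metis complex_norm_square of_real_power)

lemma Kmat_mulv:
  "(Kmat L tau \<omega> *v x) $ a = \<i> * complex_of_real \<omega> * x $ a
     + exp (- \<i> * complex_of_real (\<omega> * tau)) * (\<Sum>b\<in>UNIV. complex_of_real (L $ a $ b) * x $ b)"
proof -
  have "(Kmat L tau \<omega> *v x) $ a = (\<Sum>b\<in>UNIV. (if a = b then \<i> * complex_of_real \<omega> * x $ b else 0)
     + exp (- \<i> * complex_of_real (\<omega> * tau)) * (complex_of_real (L $ a $ b) * x $ b))"
    unfolding Kmat_def matrix_vector_mult_def vec_lambda_beta by (intro sum.cong refl) (simp add: distrib_right)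
  also have "\<dots> = \<i> * complex_of_real \<omega> * x $ a
     + exp (- \<i> * complex_of_real (\<omega> * tau)) * (\<Sum>b\<in>UNIV. complex_of_real (L $ a $ b) * x $ b)"
    by (simp add: sum.distrib sum_distrib_left)
  finally show ?thesis .
qed

lemma sing_sub:
  fixes L :: "real^'n::finite^'n"
  assumes sym: "\<And>a b. L $ a $ b = L $ b $ a" and ni: "\<not> invertible (Kmat L tau \<omega>)"
  shows "\<omega> = 0 \<or> cos (\<omega> * tau) = 0"
proof -
  let ?K = "Kmat L tau \<omega>"
  let ?e = "exp (- \<i> * complex_of_real (\<omega> * tau))"
  obtain x where x0: "x \<noteq> 0" and Kx: "?K *v x = 0"
    using ni unfolding invertible_left_inverse matrix_left_invertible_ker by blast
  define q where "q = (\<Sum>a\<in>UNIV. \<Sum>b\<in>UNIV. cnj (x $ a) * complex_of_real (L $ a $ b) * x $ b)"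
  define N where "N = (\<Sum>a\<in>UNIV. (cmod (x $ a))^2)"
  have Npos: "N > 0"
  proof -
    obtain a where "x $ a \<noteq> 0" using x0 by (metis vec_eq_iff zero_index)
    then have "(cmod (x $ a))^2 > 0" by simp
    moreover have "(cmod (x $ a))^2 \<le> N" unfolding N_def
      by (rule member_le_sum) auto
    ultimately show ?thesis by linarith
  qed
  have "0 = (\<Sum>a\<in>UNIV. cnj (x $ a) * (?K *v x) $ a)" using Kx by simp
  also have "\<dots> = (\<Sum>a\<in>UNIV. cnj (x $ a) * (\<i> * complex_of_real \<omega> * x $ a)
       + ?e * (\<Sum>b\<in>UNIV. cnj (x $ a) * complex_of_real (L $ a $ b) * x $ b))"
    unfolding Kmat_mulv by (intro sum.cong refl) (simp add: distrib_left sum_distrib_left mult_ac)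
  also have "\<dots> = \<i> * complex_of_real \<omega> * complex_of_real N + ?e * q"
  proof -
    have 1: "(\<Sum>a\<in>UNIV. cnj (x $ a) * (\<i> * complex_of_real \<omega> * x $ a)) = \<i> * complex_of_real \<omega> * complex_of_real N"
      unfolding N_def by (simp add: sum_distrib_left cmod_sq_c mult_ac)
    have 2: "(\<Sum>a\<in>UNIV. ?e * (\<Sum>b\<in>UNIV. cnj (x $ a) * complex_of_real (L $ a $ b) * x $ b)) = ?e * q"
      unfolding q_def by (simp add: sum_distrib_left)
    show ?thesis by (simp only: sum.distrib 1 2)
  qed
  finally have eq0: "\<i> * complex_of_real \<omega> * complex_of_real N + ?e * q = 0" by simp
  have "cnj q = (\<Sum>a\<in>UNIV. \<Sum>b\<in>UNIV. x $ a * complex_of_real (L $ a $ b) * cnj (x $ b))"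
    unfolding q_def by simp
  also have "\<dots> = (\<Sum>b\<in>UNIV. \<Sum>a\<in>UNIV. x $ a * complex_of_real (L $ a $ b) * cnj (x $ b))"
    by (rule sum.swap)
  also have "\<dots> = q" unfolding q_def
    by (intro sum.cong refl) (simp add: sym mult_ac)
  finally have "Im (cnj q) = Im q" by simp
  then have "Im q = 0" by simp
  then have qr: "q = complex_of_real (Re q)" by (simp add: complex_eq_iff)
  have "Re (\<i> * complex_of_real \<omega> * complex_of_real N + ?e * q) = cos (\<omega> * tau) * Re q"
    by (subst qr) (simp add: Re_exp)
  then have c: "cos (\<omega> * tau) * Re q = 0" using eq0 by (metis zero_complex.sel(1))
  show ?thesis
  proof (cases "cos (\<omega> * tau) = 0")
    case False
    then have "q = 0" using c qr by simp
    then have "\<omega> * N = 0" using eq0 by (simp add: complex_eq_iff)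
    then show ?thesis using Npos by simp
  qed simp
qed

lemma sing_negligible:
  fixes L :: "real^'n::finite^'n"
  assumes sym: "\<And>a b. L $ a $ b = L $ b $ a" and tau: "tau \<ge> 0"
  shows "negligible {\<omega>. \<not> invertible (Kmat L tau \<omega>)}"
proof -
  have sub: "{\<omega>. \<not> invertible (Kmat L tau \<omega>)} \<subseteq> insert 0 (range (\<lambda>i::int. of_int i * (pi/2) / tau))"
  proof
    fix \<omega> assume "\<omega> \<in> {\<omega>. \<not> invertible (Kmat L tau \<omega>)}"
    then have "\<omega> = 0 \<or> cos (\<omega> * tau) = 0" using sing_sub[OF sym] by blast
    moreover have "\<omega> \<in> range (\<lambda>i::int. of_int i * (pi/2) / tau)" if "cos (\<omega> * tau) = 0"
    proof -
      have "tau \<noteq> 0"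
      proof
        assume "tau = 0" with that show False by simp
      qed
      have "\<exists>i::int. odd i \<and> \<omega> * tau = of_int i * (pi/2)" using that by (simp only: cos_zero_iff_int)
      then obtain i :: int where "\<omega> * tau = of_int i * (pi/2)" by blast
      then have "\<omega> = of_int i * (pi/2) / tau" using \<open>tau \<noteq> 0\<close> by (simp add: eq_divide_eq)
      then show ?thesis by (rule range_eqI)
    qed
    ultimately show "\<omega> \<in> insert 0 (range (\<lambda>i::int. of_int i * (pi/2) / tau))" by blast
  qed
  have "negligible (\<Union>((\<lambda>y. {y}) ` insert 0 (range (\<lambda>i::int. of_int i * (pi/2) / tau))))"
    by (rule negligible_countable_Union) auto
  then have "negligible (insert 0 (range (\<lambda>i::int. of_int i * (pi/2) / tau)))" by simp
  then show ?thesis using sub negligible_subset by blast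
qed



definition inv_under :: "('n \<Rightarrow> 'n) \<Rightarrow> 'a^'n::finite^'n \<Rightarrow> bool" where
  "inv_under p X \<longleftrightarrow> (\<forall>a b. X $ p a $ p b = X $ a $ b)"

lemma sum_bij_reindex: "bij p \<Longrightarrow> (\<Sum>b\<in>UNIV. g (p b)) = (\<Sum>b\<in>UNIV. g b)"
  by (rule sum.reindex_bij_betw) (simp add: bij_def bij_betw_def)

lemma inv_mul:
  fixes A B :: "'a::semiring_1^'n::finite^'n"
  assumes "bij p" "inv_under p A" "inv_under p B"
  shows "inv_under p (A ** B)"
  unfolding inv_under_def
proof (intro allI)
  fix a c
  have "(A ** B) $ p a $ p c = (\<Sum>b\<in>UNIV. A $ p a $ b * B $ b $ p c)"
    by (simp add: matrix_matrix_mult_def)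
  also have "\<dots> = (\<Sum>b\<in>UNIV. A $ p a $ p b * B $ p b $ p c)"
    using sum_bij_reindex[OF assms(1), of "\<lambda>b. A $ p a $ b * B $ b $ p c"] by simp
  also have "\<dots> = (\<Sum>b\<in>UNIV. A $ a $ b * B $ b $ c)"
    using assms(2,3) unfolding inv_under_def by simp
  also have "\<dots> = (A ** B) $ a $ c" by (simp add: matrix_matrix_mult_def)
  finally show "(A ** B) $ p a $ p c = (A ** B) $ a $ c" .
qed

lemma inv_cmat: "inv_under p A \<Longrightarrow> inv_under p (cmat A)"
  unfolding inv_under_def cmat_def by simp

lemma inv_mat1: "inj p \<Longrightarrow> inv_under p (mat c)"
  unfolding inv_under_def mat_def by (simp add: inj_eq)

lemma inv_centering: "inj p \<Longrightarrow> inv_under p (centering :: real^'n::finite^'n)"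
  unfolding inv_under_def centering_def mat_def by (simp add: inj_eq)

lemma invertible_inv:
  assumes "invertible (K::'a::semiring_1^'n::finite^'n)"
  shows "K ** matrix_inv K = mat 1" "matrix_inv K ** K = mat 1"
proof -
  have "\<exists>A'. K ** A' = mat 1 \<and> A' ** K = mat 1" using assms unfolding invertible_def by blast
  from someI_ex[OF this] show "K ** matrix_inv K = mat 1" "matrix_inv K ** K = mat 1"
    unfolding matrix_inv_def by auto
qed

lemma inv_matrix_inv:
  fixes K :: "'a::semiring_1^'n::finite^'n"
  assumes p: "bij p" and K: "invertible K" and iK: "inv_under p K"
  shows "inv_under p (matrix_inv K)"
proof -
  let ?Y = "matrix_inv K"
  define Y' where "Y' = (\<chi> a b. ?Y $ p a $ p b)"
  have "K ** Y' = mat 1"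
  proof -
    have "(K ** Y') $ a $ c = mat 1 $ a $ c" for a c
    proof -
      have "(K ** Y') $ a $ c = (\<Sum>b\<in>UNIV. K $ a $ b * ?Y $ p b $ p c)"
        by (simp add: matrix_matrix_mult_def Y'_def)
      also have "\<dots> = (\<Sum>b\<in>UNIV. K $ p a $ p b * ?Y $ p b $ p c)"
        using iK unfolding inv_under_def by simp
      also have "\<dots> = (\<Sum>b\<in>UNIV. K $ p a $ b * ?Y $ b $ p c)"
        using sum_bij_reindex[OF p, of "\<lambda>b. K $ p a $ b * ?Y $ b $ p c"] by simp
      also have "\<dots> = (K ** ?Y) $ p a $ p c" by (simp add: matrix_matrix_mult_def)
      also have "\<dots> = mat 1 $ a $ c" using invertible_inv(1)[OF K] p
        by (simp add: mat_def bij_is_inj inj_eq)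
      finally show ?thesis .
    qed
    then show ?thesis by (simp add: vec_eq_iff)
  qed
  then have "?Y = Y'"
    by (metis invertible_inv(2)[OF K] matrix_mul_assoc matrix_mul_lid matrix_mul_rid)
  then show ?thesis unfolding inv_under_def Y'_def
    by (metis vec_lambda_beta)
qed

lemma inv_Kmat:
  assumes "inj p" "inv_under p L"
  shows "inv_under p (Kmat L tau \<omega>)"
  using assms unfolding inv_under_def Kmat_def by (simp add: inj_eq)

lemma inv_diag: "inj p \<Longrightarrow> inv_under p L \<Longrightarrow> inv_under p (\<chi> i j. if i = j then L $ i $ i else (0::real))"
  unfolding inv_under_def by (simp add: inj_eq)



lemma mult_if_left0: "(if P then x else 0) * y = (if P then x * y else (0::'a::mult_zero))"
  by simp

lemma lap_entry:
  "laplacian src tgt w $ a $ b = w * (\<Sum>e\<in>UNIV. incidence src tgt $ a $ e * incidence src tgt $ b $ e)"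
proof -
  have "laplacian src tgt w = w *\<^sub>R (incidence src tgt ** transpose (incidence src tgt))"
    unfolding laplacian_def Wmat_def by (simp add: matrix_scalar_ac scalar_matrix_assoc[symmetric])
  then show ?thesis by (simp add: matrix_matrix_mult_def transpose_def)
qed

lemma lap_offdiag:
  assumes sg: "simple_graph src tgt" and ab: "a \<noteq> b"
  shows "laplacian src tgt w $ a $ b = w * (if adj src tgt a b then -1 else 0)"
proof -
  have t: "incidence src tgt $ a $ e * incidence src tgt $ b $ e = (if {src e, tgt e} = {a, b} then -1 else 0)" for e
    using sg ab unfolding simple_graph_def incidence_def by (auto simp: doubleton_eq_iff)
  show ?thesis
  proof (cases "adj src tgt a b")
    case True
    then obtain e0 where e0: "{src e0, tgt e0} = {a, b}" unfolding adj_def by blast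
    have "{src e, tgt e} = {a, b} \<longleftrightarrow> e = e0" for e
      using sg e0 unfolding simple_graph_def by metis
    then show ?thesis using True unfolding lap_entry t by simp
  next
    case False
    then have "{src e, tgt e} \<noteq> {a, b}" for e unfolding adj_def by blast
    then show ?thesis using False unfolding lap_entry t by simp
  qed
qed

lemma lap_diag:
  assumes sg: "simple_graph src tgt"
  shows "laplacian src tgt w $ a $ a = w * real (card {v. adj src tgt a v})"
proof -
  have t: "incidence src tgt $ a $ e * incidence src tgt $ a $ e = (if a = src e \<or> a = tgt e then 1 else 0)" for e
    using sg unfolding simple_graph_def incidence_def by auto
  have s: "(\<Sum>e\<in>UNIV. incidence src tgt $ a $ e * incidence src tgt $ a $ e) = real (card {e. a = src e \<or> a = tgt e})"
    unfolding t by (simp add: sum.If_cases)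
  let ?f = "\<lambda>e. if src e = a then tgt e else src e"
  have "bij_betw ?f {e. a = src e \<or> a = tgt e} {v. adj src tgt a v}"
    unfolding bij_betw_def
  proof
    show "inj_on ?f {e. a = src e \<or> a = tgt e}"
    proof
      fix e1 e2 assume "e1 \<in> {e. a = src e \<or> a = tgt e}" "e2 \<in> {e. a = src e \<or> a = tgt e}" "?f e1 = ?f e2"
      then have "{src e1, tgt e1} = {src e2, tgt e2}" by (auto split: if_splits)
      then show "e1 = e2" using sg unfolding simple_graph_def by blast
    qed
    show "?f ` {e. a = src e \<or> a = tgt e} = {v. adj src tgt a v}"
    proof
      show "?f ` {e. a = src e \<or> a = tgt e} \<subseteq> {v. adj src tgt a v}"
        unfolding adj_def by (auto simp: insert_commute)
      show "{v. adj src tgt a v} \<subseteq> ?f ` {e. a = src e \<or> a = tgt e}"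
      proof
        fix v assume "v \<in> {v. adj src tgt a v}"
        then obtain e where e: "{src e, tgt e} = {a, v}" unfolding adj_def by blast
        have "src e \<noteq> tgt e" using sg unfolding simple_graph_def by blast
        then have "a = src e \<or> a = tgt e" "?f e = v" using e by (auto simp: doubleton_eq_iff)
        then show "v \<in> ?f ` {e. a = src e \<or> a = tgt e}" by force
      qed
    qed
  qed
  then have "card {e. a = src e \<or> a = tgt e} = card {v. adj src tgt a v}" by (rule bij_betw_same_card)
  then show ?thesis unfolding lap_entry s by simp
qed

lemma inv_laplacian:
  assumes sg: "simple_graph src tgt" and ga: "graph_automorphism src tgt p"
  shows "inv_under p (laplacian src tgt w)"
  unfolding inv_under_def
proof (intro allI)
  fix a b
  have bp: "bij p" and ad: "\<And>u v. adj src tgt u v \<longleftrightarrow> adj src tgt (p u) (p v)"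
    using ga unfolding graph_automorphism_def by auto
  show "laplacian src tgt w $ p a $ p b = laplacian src tgt w $ a $ b"
  proof (cases "a = b")
    case True
    have "{v. adj src tgt (p a) v} = p ` {v. adj src tgt a v}"
    proof
      show "{v. adj src tgt (p a) v} \<subseteq> p ` {v. adj src tgt a v}"
      proof
        fix v assume "v \<in> {v. adj src tgt (p a) v}"
        moreover have "v = p (inv p v)" using bij_is_surj[OF bp] surj_f_inv_f by metis
        ultimately show "v \<in> p ` {v. adj src tgt a v}" using ad by (metis imageI mem_Collect_eq)
      qed
      show "p ` {v. adj src tgt a v} \<subseteq> {v. adj src tgt (p a) v}" using ad by auto
    qed
    then have "card {v. adj src tgt (p a) v} = card {v. adj src tgt a v}"
      using bp by (metis bij_is_inj card_image inj_on_subset subset_UNIV)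
    then show ?thesis using True lap_diag[OF sg] by simp
  next
    case False
    then have "p a \<noteq> p b" using bp by (simp add: bij_is_inj inj_eq)
    then show ?thesis using False lap_offdiag[OF sg] ad by simp
  qed
qed



lemma inv_diff: "inv_under p A \<Longrightarrow> inv_under p B \<Longrightarrow> inv_under p (A - B)"
  unfolding inv_under_def by simp

lemma inv_B_agent:
  assumes sg: "simple_graph src tgt" and ga: "graph_automorphism src tgt p"
  shows "inv_under p (B_agent src tgt w nz)"
proof -
  have ip: "inj p" using ga unfolding graph_automorphism_def by (simp add: bij_is_inj)
  have iL: "inv_under p (laplacian src tgt w)" by (rule inv_laplacian[OF sg ga])
  have iD: "inv_under p (degree_mat src tgt w)"
    unfolding degree_mat_def by (rule inv_diag[OF ip iL])
  show ?thesis
    by (cases nz) (simp_all add: B_agent_def inv_mat1[OF ip] iL iD adjacency_mat_def inv_diff)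
qed

lemma inv_Y:
  assumes sg: "simple_graph src tgt" and ga: "graph_automorphism src tgt p"
    and K: "invertible (Kmat (laplacian src tgt w) tau \<omega>)"
  shows "inv_under p (cmat centering ** matrix_inv (Kmat (laplacian src tgt w) tau \<omega>))"
proof -
  have bp: "bij p" using ga unfolding graph_automorphism_def by simp
  have ip: "inj p" using bp by (simp add: bij_is_inj)
  have iL: "inv_under p (laplacian src tgt w)" by (rule inv_laplacian[OF sg ga])
  show ?thesis
    by (intro inv_mul[OF bp] inv_cmat inv_centering[OF ip] inv_matrix_inv[OF bp K] inv_Kmat[OF ip iL])
qed

lemma agent_cn_eq:
  assumes sg: "simple_graph src tgt" and ga: "graph_automorphism src tgt p"
    and K: "invertible (Kmat (laplacian src tgt w) tau \<omega>)"
  shows "cn (laplacian src tgt w) (B_agent src tgt w nz) tau \<omega> (p k) = cn (laplacian src tgt w) (B_agent src tgt w nz) tau \<omega> k"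
proof -
  have bp: "bij p" using ga unfolding graph_automorphism_def by simp
  let ?X = "Xmat (laplacian src tgt w) (B_agent src tgt w nz) tau \<omega>"
  have iX: "inv_under p ?X" unfolding Xmat_def
    by (intro inv_mul[OF bp] inv_Y[OF sg ga K] inv_cmat inv_B_agent[OF sg ga])
  have "cn (laplacian src tgt w) (B_agent src tgt w nz) tau \<omega> (p k) = (\<Sum>a\<in>UNIV. (cmod (?X $ p a $ p k))^2)"
    unfolding cn_def using sum_bij_reindex[OF bp, of "\<lambda>a. (cmod (?X $ a $ p k))^2"] by simp
  also have "\<dots> = cn (laplacian src tgt w) (B_agent src tgt w nz) tau \<omega> k"
    unfolding cn_def using iX unfolding inv_under_def by simp
  finally show ?thesis .
qed

lemma B_link_entry:
  "B_link src tgt w nz $ b $ e = (case nz of Communication \<Rightarrow> w | Measurement \<Rightarrow> -1) * incidence src tgt $ b $ e"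
proof (cases nz)
  case Communication
  have "incidence src tgt ** Wmat w = w *\<^sub>R incidence src tgt"
    unfolding Wmat_def by (simp add: matrix_scalar_ac)
  then show ?thesis using Communication unfolding B_link_def by simp
next
  case Measurement
  then show ?thesis unfolding B_link_def by simp
qed

lemma sum_inc:
  assumes "src e \<noteq> tgt e"
  shows "(\<Sum>b\<in>UNIV. Y $ a $ b * complex_of_real (c * incidence src tgt $ b $ e))
        = complex_of_real c * (Y $ a $ src e - Y $ a $ tgt e)"
proof -
  have "Y $ a $ b * complex_of_real (c * incidence src tgt $ b $ e)
     = (if b = src e then complex_of_real c * Y $ a $ b else 0) - (if b = tgt e then complex_of_real c * Y $ a $ b else 0)" for b
    using assms unfolding incidence_def by auto
  then show ?thesis by (simp add: sum_subtractf right_diff_distrib)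
qed

lemma link_cn:
  assumes sg: "simple_graph src tgt"
  shows "cn (laplacian src tgt w) (B_link src tgt w nz) tau \<omega> e
    = (case nz of Communication \<Rightarrow> w | Measurement \<Rightarrow> -1)^2 *
      (\<Sum>a\<in>UNIV. (cmod ((cmat centering ** matrix_inv (Kmat (laplacian src tgt w) tau \<omega>)) $ a $ src e
             - (cmat centering ** matrix_inv (Kmat (laplacian src tgt w) tau \<omega>)) $ a $ tgt e))^2)"
proof -
  let ?Y = "cmat centering ** matrix_inv (Kmat (laplacian src tgt w) tau \<omega>)"
  let ?c = "case nz of Communication \<Rightarrow> w | Measurement \<Rightarrow> -1"
  have ne: "src e \<noteq> tgt e" using sg unfolding simple_graph_def by blast
  have "Xmat (laplacian src tgt w) (B_link src tgt w nz) tau \<omega> $ a $ e = complex_of_real ?c * (?Y $ a $ src e - ?Y $ a $ tgt e)" for a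
    unfolding Xmat_def matrix_matrix_mult_def[of ?Y] cmat_def[of "B_link src tgt w nz"] vec_lambda_beta B_link_entry
    by (rule sum_inc[where src=src and tgt=tgt and e=e, OF ne])
  then show ?thesis unfolding cn_def
    by (simp add: norm_mult power_mult_distrib sum_distrib_left)
qed

lemma link_cn_eq:
  assumes sg: "simple_graph src tgt" and ga: "graph_automorphism src tgt p"
    and K: "invertible (Kmat (laplacian src tgt w) tau \<omega>)"
    and pe: "p ` {src e, tgt e} = {src f, tgt f}"
  shows "cn (laplacian src tgt w) (B_link src tgt w nz) tau \<omega> f = cn (laplacian src tgt w) (B_link src tgt w nz) tau \<omega> e"
proof -
  have bp: "bij p" using ga unfolding graph_automorphism_def by simp
  let ?Y = "cmat centering ** matrix_inv (Kmat (laplacian src tgt w) tau \<omega>)"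
  define Dd where "Dd u v = (\<Sum>a\<in>UNIV. (cmod (?Y $ a $ u - ?Y $ a $ v))^2)" for u v
  have iY: "inv_under p ?Y" by (rule inv_Y[OF sg ga K])
  have Dp: "Dd (p u) (p v) = Dd u v" for u v
  proof -
    have "Dd (p u) (p v) = (\<Sum>a\<in>UNIV. (cmod (?Y $ p a $ p u - ?Y $ p a $ p v))^2)"
      unfolding Dd_def using sum_bij_reindex[OF bp, of "\<lambda>a. (cmod (?Y $ a $ p u - ?Y $ a $ p v))^2"] by simp
    also have "\<dots> = Dd u v" unfolding Dd_def using iY unfolding inv_under_def by simp
    finally show ?thesis .
  qed
  have Ds: "Dd u v = Dd v u" for u v unfolding Dd_def by (simp add: norm_minus_commute)
  have "{p (src e), p (tgt e)} = {src f, tgt f}" using pe by simp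
  then have "Dd (src f) (tgt f) = Dd (src e) (tgt e)"
    by (metis Dp Ds doubleton_eq_iff)
  then show ?thesis unfolding link_cn[OF sg] Dd_def by simp
qed


theorem proposition1:
  fixes src tgt :: "'e::finite \<Rightarrow> 'n::finite" and w tau :: real
  assumes "simple_graph src tgt" and "connected_graph src tgt"
    and "w > 0" and "tau \<ge> 0"
    and "tau * largest_eigenvalue (laplacian src tgt w) < pi / 2"
  shows "(vertex_transitive src tgt \<longrightarrow>
           (\<forall>nz s i. (\<forall>k. s k > 0) \<longrightarrow>
              ((\<lambda>t. performance (laplacian src tgt w) (B_agent src tgt w nz) tau (s(i := t)))
                 has_real_derivative
                 (performance (laplacian src tgt w) (B_agent src tgt w nz) tau (\<lambda>_. 1) / real CARD('n)))
               (at (s i))))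
       \<and> (edge_transitive src tgt \<longrightarrow>
           (\<forall>nz s e. (\<forall>k. s k > 0) \<longrightarrow>
              ((\<lambda>t. performance (laplacian src tgt w) (B_link src tgt w nz) tau (s(e := t)))
                 has_real_derivative
                 (performance (laplacian src tgt w) (B_link src tgt w nz) tau (\<lambda>_. 1) / real CARD('e)))
               (at (s e))))"
proof -
  note sg = assms(1)
  let ?L = "laplacian src tgt w"
  let ?S = "{\<omega>. \<not> invertible (Kmat ?L tau \<omega>)}"
  have sym: "\<And>a b. ?L $ a $ b = ?L $ b $ a" unfolding lap_entry by (simp add: mult.commute)
  have negl: "negligible ?S" by (rule sing_negligible[OF sym assms(4)])
  show ?thesis
  proof (intro conjI impI allI)
    fix nz s i assume vt: "vertex_transitive src tgt" and sp: "\<forall>k. (s::'n \<Rightarrow> real) k > 0"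
    show "((\<lambda>t. performance ?L (B_agent src tgt w nz) tau (s(i := t))) has_real_derivative
           performance ?L (B_agent src tgt w nz) tau (\<lambda>_. 1) / real CARD('n)) (at (s i))"
    proof (rule deriv_from_sym[OF negl, where kk=i])
      fix \<omega> k assume "\<omega> \<notin> ?S"
      then have K: "invertible (Kmat ?L tau \<omega>)" by simp
      obtain p where "graph_automorphism src tgt p" "p i = k" using vt unfolding vertex_transitive_def by blast
      then show "cn ?L (B_agent src tgt w nz) tau \<omega> k = cn ?L (B_agent src tgt w nz) tau \<omega> i"
        using agent_cn_eq[OF sg _ K] by metis
    qed (use sp in auto)
  next
    fix nz s e assume et: "edge_transitive src tgt" and sp: "\<forall>k. (s::'e \<Rightarrow> real) k > 0"
    show "((\<lambda>t. performance ?L (B_link src tgt w nz) tau (s(e := t))) has_real_derivative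
           performance ?L (B_link src tgt w nz) tau (\<lambda>_. 1) / real CARD('e)) (at (s e))"
    proof (rule deriv_from_sym[OF negl, where kk=e])
      fix \<omega> k assume "\<omega> \<notin> ?S"
      then have K: "invertible (Kmat ?L tau \<omega>)" by simp
      obtain p where "graph_automorphism src tgt p" "p ` {src e, tgt e} = {src k, tgt k}"
        using et unfolding edge_transitive_def by blast
      then show "cn ?L (B_link src tgt w nz) tau \<omega> k = cn ?L (B_link src tgt w nz) tau \<omega> e"
        using link_cn_eq[OF sg _ K] by metis
    qed (use sp in auto)
  qed
qed

end
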